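(* There exists a family of smooth functions $\{\chi_\delta:\mathbb{R}\to[0,1]\}_{\delta\in(0,1]}$, depending continuously on $\delta$, such that: (i) for each $\delta\in(0,1]$, $\chi_\delta$ is decreasing; (ii) for each $\delta\in(0,1]$ there exists $\eta_\delta>0$ with $\chi_\delta(x)=1$ for $x<\eta_\delta$ and $\chi_\delta(x)=0$ for $x>\frac{\pi}{2}-\eta_\delta$; (iii) $\chi_\delta\to\mathbb{1}_{\{x\le0\}}$ pointwise as $\delta\downarrow0$; (iv) $$\lim_{\delta\downarrow0}\ \sup_{r\in(0,\pi/2)}\frac{\int_0^r-\chi_\delta'(x)\sin(x)\,dx}{\sin(r)}=0.$$ *)

theory Defs
  imports "HOL-Analysis.Analysis"
begin

definition smooth_real :: "(real \<Rightarrow> real) \<Rightarrow> bool" where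
  "smooth_real f \<longleftrightarrow> (\<forall>n x. ((deriv ^^ n) f) differentiable (at x))"

end

theory Submission
  imports Defs "HOL-Computational_Algebra.Polynomial"
begin

definition Dn :: "real set \<Rightarrow> nat \<Rightarrow> (real \<Rightarrow> real) \<Rightarrow> bool" where
  "Dn U n f \<longleftrightarrow> (\<forall>k\<le>n. \<forall>x\<in>U. (deriv ^^ k) f differentiable (at x))"

definition smooth_on :: "real set \<Rightarrow> (real \<Rightarrow> real) \<Rightarrow> bool" where
  "smooth_on U f \<longleftrightarrow> (\<forall>n. Dn U n f)"

lemma all_le_Suc: "(\<forall>k\<le>Suc n. P k) \<longleftrightarrow> P 0 \<and> (\<forall>k\<le>n. P (Suc k))"
  by (metis Suc_le_mono le0 not0_implies_Suc)

lemma Dn_0: "Dn U 0 f \<longleftrightarrow> (\<forall>x\<in>U. f differentiable (at x))"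
  by (simp add: Dn_def)

lemma Dn_Suc: "Dn U (Suc n) f \<longleftrightarrow> (\<forall>x\<in>U. f differentiable (at x)) \<and> Dn U n (deriv f)"
  unfolding Dn_def all_le_Suc by (simp only: funpow_Suc_right o_apply funpow_0)

lemma Dn_mono: "m \<le> n \<Longrightarrow> Dn U n f \<Longrightarrow> Dn U m f"
  by (auto simp: Dn_def)

lemma Dn_SucD: "Dn U (Suc n) f \<Longrightarrow> Dn U n f"
  unfolding Dn_def by auto

lemma smooth_onD: "smooth_on U f \<Longrightarrow> Dn U n f"
  by (simp add: smooth_on_def)

lemma real_diff_DERIV: "f differentiable (at (x::real)) \<Longrightarrow> DERIV f x :> deriv f x"
  using DERIV_deriv_iff_real_differentiable by blast

lemma DERIV_differentiable: "DERIV f (x::real) :> D \<Longrightarrow> f differentiable (at x)"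
  using real_differentiable_def by blast

lemma deriv_cong_open:
  assumes "open U" "\<And>y. y \<in> U \<Longrightarrow> f y = g y" "x \<in> U"
  shows "deriv f x = deriv g x"
proof -
  have "(\<lambda>D. DERIV f x :> D) = (\<lambda>D. DERIV g x :> D)"
    using has_field_derivative_transform_within_open[OF _ assms(1,3)] assms(2)
    by (metis)
  then show ?thesis unfolding deriv_def by simp
qed

lemma higher_deriv_cong_open:
  assumes "open U" "\<And>y. y \<in> U \<Longrightarrow> f y = g y" "x \<in> U"
  shows "(deriv ^^ k) f x = (deriv ^^ k) g x"
  using assms(3)
proof (induction k arbitrary: x)
  case 0 then show ?case using assms(2) by simp
next
  case (Suc k)
  then show ?case using deriv_cong_open[OF assms(1), of "(deriv ^^ k) f" "(deriv ^^ k) g" x] by simp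
qed

lemma differentiable_cong_open:
  assumes "open U" "\<And>y. y \<in> U \<Longrightarrow> f y = g y" "x \<in> U" "f differentiable (at x)"
  shows "g differentiable (at x)"
  using assms has_derivative_transform_within_open unfolding differentiable_def by metis

lemma Dn_cong:
  assumes "open U" "\<And>y. y \<in> U \<Longrightarrow> f y = g y" "Dn U n f"
  shows "Dn U n g"
  unfolding Dn_def
proof (intro allI impI ballI)
  fix k x assume "k \<le> n" "x \<in> U"
  have dd: "(deriv ^^ k) f differentiable (at x)" using assms(3) \<open>k \<le> n\<close> \<open>x \<in> U\<close> by (auto simp: Dn_def)
  show "(deriv ^^ k) g differentiable (at x)"
  proof (rule differentiable_cong_open[OF assms(1), of "(deriv ^^ k) f" "(deriv ^^ k) g" x])
    fix y assume "y \<in> U" then show "(deriv ^^ k) f y = (deriv ^^ k) g y"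
      using higher_deriv_cong_open[OF assms(1), where f=f and g=g and x=y and k=k] assms(2) by blast
  qed (use dd \<open>x \<in> U\<close> in auto)
qed

lemma smooth_on_cong:
  assumes "open U" "\<And>y. y \<in> U \<Longrightarrow> f y = g y" "smooth_on U f"
  shows "smooth_on U g"
  using Dn_cong assms unfolding smooth_on_def by blast

lemma Dn_add:
  assumes "open U" "Dn U n f" "Dn U n g"
  shows "Dn U n (\<lambda>x. f x + g x)"
  using assms(2,3)
proof (induction n arbitrary: f g)
  case 0 then show ?case by (simp add: Dn_0)
next
  case (Suc n)
  have df: "\<forall>x\<in>U. f differentiable (at x)" and dg: "\<forall>x\<in>U. g differentiable (at x)"
    using Suc.prems by (auto simp: Dn_Suc)
  have A: "Dn U n (\<lambda>x. deriv f x + deriv g x)"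
    using Suc by (auto simp: Dn_Suc)
  have B: "deriv f x + deriv g x = deriv (\<lambda>x. f x + g x) x" if x: "x \<in> U" for x
  proof -
    have "DERIV (\<lambda>x. f x + g x) x :> deriv f x + deriv g x"
      using df dg x by (intro DERIV_add real_diff_DERIV) auto
    then show ?thesis by (rule DERIV_imp_deriv[symmetric])
  qed
  have "Dn U n (deriv (\<lambda>x. f x + g x))" by (rule Dn_cong[OF assms(1) B A])
  then show ?case using df dg by (simp add: Dn_Suc)
qed

lemma Dn_mult:
  assumes "open U" "Dn U n f" "Dn U n g"
  shows "Dn U n (\<lambda>x. f x * g x)"
  using assms(2,3)
proof (induction n arbitrary: f g)
  case 0 then show ?case by (simp add: Dn_0)
next
  case (Suc n)
  have df: "\<forall>x\<in>U. f differentiable (at x)" and dg: "\<forall>x\<in>U. g differentiable (at x)"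
    using Suc.prems by (auto simp: Dn_Suc)
  have fn: "Dn U n f" "Dn U n g" using Suc.prems Dn_SucD by blast+
  have A: "Dn U n (\<lambda>x. f x * deriv g x + deriv f x * g x)"
    using Suc fn by (intro Dn_add[OF assms(1)]) (auto simp: Dn_Suc)
  have B: "f x * deriv g x + deriv f x * g x = deriv (\<lambda>x. f x * g x) x" if x: "x \<in> U" for x
  proof -
    have "DERIV (\<lambda>x. f x * g x) x :> f x * deriv g x + deriv f x * g x"
      using df dg x by (intro DERIV_mult' real_diff_DERIV) auto
    then show ?thesis by (rule DERIV_imp_deriv[symmetric])
  qed
  have "Dn U n (deriv (\<lambda>x. f x * g x))" by (rule Dn_cong[OF assms(1) B A])
  then show ?case using df dg by (simp add: Dn_Suc)
qed

lemma Dn_compose: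
  assumes "open U" "open V" "\<And>x. x \<in> U \<Longrightarrow> g x \<in> V" "Dn V n f" "Dn U n g"
  shows "Dn U n (\<lambda>x. f (g x))"
  using assms(4,5)
proof (induction n arbitrary: f)
  case 0
  show ?case unfolding Dn_0
  proof
    fix x assume x: "x \<in> U"
    have "DERIV (\<lambda>x. f (g x)) x :> deriv f (g x) * deriv g x"
      using 0 x assms(3) by (intro DERIV_chain2[OF real_diff_DERIV real_diff_DERIV]) (auto simp: Dn_0)
    then show "(\<lambda>x. f (g x)) differentiable (at x)" by (rule DERIV_differentiable)
  qed
next
  case (Suc n)
  have df: "\<forall>x\<in>V. f differentiable (at x)" and dg: "\<forall>x\<in>U. g differentiable (at x)"
    using Suc.prems by (auto simp: Dn_Suc)
  have gn: "Dn U n g" using Suc.prems Dn_SucD by blast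
  have A: "Dn U n (\<lambda>x. deriv f (g x) * deriv g x)"
    using Suc gn by (intro Dn_mult[OF assms(1)]) (auto simp: Dn_Suc)
  have C: "DERIV (\<lambda>x. f (g x)) x :> deriv f (g x) * deriv g x" if x: "x \<in> U" for x
      using df dg x assms(3) by (intro DERIV_chain2[OF real_diff_DERIV real_diff_DERIV]) auto
  have B: "deriv f (g x) * deriv g x = deriv (\<lambda>x. f (g x)) x" if x: "x \<in> U" for x
    using C[OF x] by (rule DERIV_imp_deriv[symmetric])
  have "Dn U n (deriv (\<lambda>x. f (g x)))" by (rule Dn_cong[OF assms(1) B A])
  moreover have "\<forall>x\<in>U. (\<lambda>x. f (g x)) differentiable (at x)"
    using C DERIV_differentiable by blast
  ultimately show ?case by (simp add: Dn_Suc)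
qed

lemma smooth_on_add: "open U \<Longrightarrow> smooth_on U f \<Longrightarrow> smooth_on U g \<Longrightarrow> smooth_on U (\<lambda>x. f x + g x)"
  using Dn_add unfolding smooth_on_def by blast

lemma smooth_on_mult: "open U \<Longrightarrow> smooth_on U f \<Longrightarrow> smooth_on U g \<Longrightarrow> smooth_on U (\<lambda>x. f x * g x)"
  using Dn_mult unfolding smooth_on_def by blast

lemma smooth_on_compose: "open U \<Longrightarrow> open V \<Longrightarrow> (\<And>x. x \<in> U \<Longrightarrow> g x \<in> V) \<Longrightarrow>
   smooth_on V f \<Longrightarrow> smooth_on U g \<Longrightarrow> smooth_on U (\<lambda>x. f (g x))"
  using Dn_compose unfolding smooth_on_def by blast

lemma smooth_on_class:
  assumes "open U" "f \<in> F" "\<And>g. g \<in> F \<Longrightarrow> \<exists>g'\<in>F. \<forall>x\<in>U. DERIV g x :> g' x"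
  shows "smooth_on U f"
proof -
  have *: "\<exists>h\<in>F. \<forall>x\<in>U. (deriv ^^ k) f x = h x" for k
  proof (induction k)
    case 0 then show ?case using assms(2) by auto
  next
    case (Suc k)
    then obtain h where h: "h \<in> F" "\<forall>x\<in>U. (deriv ^^ k) f x = h x" by blast
    obtain h' where h': "h' \<in> F" "\<forall>x\<in>U. DERIV h x :> h' x" using assms(3)[OF h(1)] by blast
    have "\<forall>x\<in>U. (deriv ^^ Suc k) f x = h' x"
    proof
      fix x assume x: "x \<in> U"
      have "(deriv ^^ Suc k) f x = deriv ((deriv ^^ k) f) x" by simp
      also have "\<dots> = deriv h x" using deriv_cong_open[OF assms(1) _ x] h(2) by blast
      also have "\<dots> = h' x" using h'(2) x DERIV_imp_deriv by blast
      finally show "(deriv ^^ Suc k) f x = h' x" .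
    qed
    then show ?case using h' by blast
  qed
  show ?thesis unfolding smooth_on_def Dn_def
  proof (intro allI impI ballI)
    fix n k x assume x: "x \<in> U"
    obtain h where h: "h \<in> F" "\<forall>x\<in>U. (deriv ^^ k) f x = h x" using * by blast
    obtain h' where h': "\<forall>x\<in>U. DERIV h x :> h' x" using assms(3)[OF h(1)] by blast
    have "h differentiable (at x)" using h' x real_differentiable_def by blast
    then show "(deriv ^^ k) f differentiable (at x)"
      using differentiable_cong_open[OF assms(1) _ x, of h] h(2) by metis
  qed
qed

lemma smooth_on_affine: "open U \<Longrightarrow> smooth_on U (\<lambda>x. a * x + b)"
  apply (rule smooth_on_class[where F="{f. \<exists>a b. f = (\<lambda>x. a * x + b)}"])
   apply auto[2]
  subgoal for g
  proof -
    assume "g \<in> {f. \<exists>a b. f = (\<lambda>x. a * x + b)}"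
    then obtain a b where g: "g = (\<lambda>x. a * x + b)" by blast
    show ?thesis
      apply (rule bexI[where x="\<lambda>x. 0 * x + a"])
       apply (auto simp: g intro!: derivative_eq_intros)[1]
      apply blast
      done
  qed
  done

lemma smooth_on_const: "open U \<Longrightarrow> smooth_on U (\<lambda>x. c)"
  using smooth_on_affine[of U 0 c] by simp

lemma smooth_on_exp: "smooth_on UNIV exp"
  by (rule smooth_on_class[where F="{exp}"]) (auto intro: DERIV_exp)

lemma smooth_on_inverse: "smooth_on {0<..} inverse"
proof (rule smooth_on_class[where F="{f. \<exists>c k. f = (\<lambda>x::real. c * inverse x ^ k)}"])
  show "inverse \<in> {f. \<exists>c k. f = (\<lambda>x::real. c * inverse x ^ k)}"
    unfolding mem_Collect_eq by (rule exI[of _ 1], rule exI[of _ 1]) (simp add: fun_eq_iff)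
  fix g assume "g \<in> {f. \<exists>c k. f = (\<lambda>x::real. c * inverse x ^ k)}"
  then obtain c k where g: "g = (\<lambda>x. c * inverse x ^ k)" by blast
  show "\<exists>g'\<in>{f. \<exists>c k. f = (\<lambda>x::real. c * inverse x ^ k)}. \<forall>x\<in>{0<..}. DERIV g x :> g' x"
  proof (intro bexI ballI)
    fix x :: real assume x: "x \<in> {0<..}"
    show "DERIV g x :> (- c * real k) * inverse x ^ (k + 1)"
      unfolding g using x
      apply (auto intro!: derivative_eq_intros)
      apply (cases k) apply (auto simp: field_simps power_Suc)
      done
  qed blast
qed auto

lemma smooth_on_ln: "smooth_on {0<..} ln"
  unfolding smooth_on_def
proof
  fix n
  have "Dn {0<..} n (deriv ln)"
    using smooth_onD[OF smooth_on_inverse] Dn_cong[of "{0<..}" inverse "deriv ln"]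
    by (metis DERIV_imp_deriv DERIV_ln greaterThan_iff open_greaterThan)
  moreover have "\<forall>x::real\<in>{0<..}. ln differentiable (at x)"
    using DERIV_ln DERIV_differentiable by (metis greaterThan_iff)
  ultimately have "Dn {0<..} (Suc n) ln" by (simp add: Dn_Suc)
  then show "Dn {0<..} n ln" by (rule Dn_SucD)
qed


lemma smooth_real_cover:
  assumes "smooth_on A f" "smooth_on B f" "A \<union> B = UNIV"
  shows "smooth_real f"
  unfolding smooth_real_def
proof (intro allI)
  fix n x
  have "x \<in> A \<or> x \<in> B" using assms(3) by blast
  then show "(deriv ^^ n) f differentiable (at x)"
    using assms(1,2) unfolding smooth_on_def Dn_def by blast
qed

lemma smooth_real_imp: "smooth_real f \<Longrightarrow> smooth_on UNIV f"
  unfolding smooth_real_def smooth_on_def Dn_def by blast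

definition flat :: "real \<Rightarrow> real" where
  "flat x = (if x > 0 then exp (- inverse x) else 0)"

lemma poly_exp_lim: "((\<lambda>y. poly q y * exp (- y)) \<longlongrightarrow> (0::real)) at_top"
proof -
  have eq: "poly q y * exp (- y) = (\<Sum>i\<le>degree q. coeff q i * (y ^ i / exp y))" for y :: real
    unfolding poly_altdef exp_minus by (simp add: sum_distrib_right divide_inverse mult.assoc)
  have "((\<lambda>y. \<Sum>i\<le>degree q. coeff q i * (y ^ i / exp y)) \<longlongrightarrow> (0::real)) at_top"
    by (intro tendsto_null_sum tendsto_mult_right_zero tendsto_power_div_exp_0)
  then show ?thesis by (simp only: eq)
qed

definition flatp :: "real poly \<Rightarrow> real \<Rightarrow> real" where
  "flatp p x = (if x > 0 then poly p (inverse x) * exp (- inverse x) else 0)"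

lemma flatp_deriv:
  "DERIV (flatp p) x :> flatp ([:0,0,1:] * (p - pderiv p)) x"
proof -
  consider "x > 0" | "x < 0" | "x = 0" by linarith
  then show ?thesis
  proof cases
    case 1
    have D: "DERIV (\<lambda>x. poly p (inverse x) * exp (- inverse x)) x :>
      poly (pderiv p) (inverse x) * (- (inverse x * inverse x)) * exp (- inverse x) +
      poly p (inverse x) * (exp (- inverse x) * (inverse x * inverse x))"
      using 1
      by (auto intro!: derivative_eq_intros DERIV_chain2[OF poly_DERIV] simp: power2_eq_square)
    have "DERIV (\<lambda>x. poly p (inverse x) * exp (- inverse x)) x :> flatp ([:0,0,1:] * (p - pderiv p)) x"
      using 1 by (intro DERIV_cong[OF D]) (simp add: flatp_def poly_pCons algebra_simps)
    then show ?thesis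
      by (rule has_field_derivative_transform_within_open[where S="{0<..}"])
         (use 1 in \<open>auto simp: flatp_def\<close>)
  next
    case 2
    have "DERIV (\<lambda>x. 0) x :> flatp ([:0,0,1:] * (p - pderiv p)) x"
      using 2 by (simp add: flatp_def)
    then show ?thesis
      by (rule has_field_derivative_transform_within_open[where S="{..<0}"])
         (use 2 in \<open>auto simp: flatp_def\<close>)
  next
    case 3
    have r: "((\<lambda>h. poly (pCons 0 p) (inverse h) * exp (- inverse h)) \<longlongrightarrow> 0) (at_right 0)"
      by (rule filterlim_compose[OF poly_exp_lim filterlim_inverse_at_top_right])
    have "((\<lambda>h. (flatp p (0 + h) - flatp p 0) / h) \<longlongrightarrow> 0) (at_right 0)"
    proof (rule Lim_transform_eventually[OF r])
      show "\<forall>\<^sub>F h in at_right 0. poly (pCons 0 p) (inverse h) * exp (- inverse h) =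
          (flatp p (0 + h) - flatp p 0) / h"
        using eventually_at_right_less[of "0::real"]
        by (rule eventually_mono) (auto simp: flatp_def field_simps)
    qed
    moreover have "((\<lambda>h. (flatp p (0 + h) - flatp p 0) / h) \<longlongrightarrow> 0) (at_left 0)"
    proof (rule tendsto_eventually)
      show "\<forall>\<^sub>F h in at_left 0. (flatp p (0 + h) - flatp p 0) / h = 0"
      proof (rule eventually_mono)
        show "\<forall>\<^sub>F h in at_left (0::real). h \<in> {-1<..<0}" by (rule eventually_at_left_real) simp
      qed (auto simp: flatp_def)
    qed
    ultimately have "((\<lambda>h. (flatp p (0 + h) - flatp p 0) / h) \<longlongrightarrow> 0) (at 0)"
      by (simp add: filterlim_at_split)
    then show ?thesis using 3 unfolding DERIV_def by (simp add: flatp_def)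
  qed
qed

lemma smooth_flat: "smooth_on UNIV flat"
proof (rule smooth_on_class[where F="range flatp"])
  have "flat = flatp [:1:]" by (simp add: fun_eq_iff flat_def flatp_def)
  then show "flat \<in> range flatp" by blast
  fix g assume "g \<in> range flatp"
  then obtain p where "g = flatp p" by blast
  then show "\<exists>g'\<in>range flatp. \<forall>x\<in>UNIV. DERIV g x :> g' x"
    using flatp_deriv by blast
qed auto

lemma flat_pos: "x > 0 \<Longrightarrow> flat x > 0" by (simp add: flat_def)
lemma flat_zero: "x \<le> 0 \<Longrightarrow> flat x = 0" by (simp add: flat_def)
lemma flat_nonneg: "flat x \<ge> 0" by (simp add: flat_def)
lemma flat_mono: "x \<le> y \<Longrightarrow> flat x \<le> flat y"
  by (auto simp: flat_def le_imp_inverse_le)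

definition step :: "real \<Rightarrow> real" where
  "step t = flat t / (flat t + flat (1 - t))"

lemma step_den_pos: "flat t + flat (1 - t) > 0"
proof (cases "t > 0")
  case True then show ?thesis using flat_pos[of t] flat_nonneg[of "1-t"] by linarith
next
  case False then show ?thesis using flat_pos[of "1-t"] flat_nonneg[of t] by linarith
qed

lemma smooth_step: "smooth_on UNIV step"
proof -
  have d: "smooth_on UNIV (\<lambda>t. flat t + flat (1 - t))"
    using smooth_flat smooth_on_compose[OF open_UNIV open_UNIV _ smooth_flat smooth_on_affine[of UNIV "-1" 1]]
    by (intro smooth_on_add) auto
  have "smooth_on UNIV (\<lambda>t. inverse (flat t + flat (1 - t)))"
    by (rule smooth_on_compose[OF open_UNIV _ _ smooth_on_inverse d]) (use step_den_pos in auto)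
  then have "smooth_on UNIV (\<lambda>t. flat t * inverse (flat t + flat (1 - t)))"
    by (intro smooth_on_mult smooth_flat) auto
  then show ?thesis
    by (rule smooth_on_cong[rotated 2]) (auto simp: step_def divide_inverse)
qed

lemma step_zero: "t \<le> 0 \<Longrightarrow> step t = 0" by (simp add: step_def flat_zero)
lemma step_one: "t \<ge> 1 \<Longrightarrow> step t = 1"
  using flat_pos[of t] by (simp add: step_def flat_zero)
lemma step_nonneg: "step t \<ge> 0"
  using step_den_pos[of t] flat_nonneg[of t] by (simp add: step_def)
lemma step_le1: "step t \<le> 1"
  using step_den_pos[of t] flat_nonneg[of "1-t"] by (simp add: step_def)
lemma step_mono: assumes "s \<le> t" shows "step s \<le> step t"
proof -
  have a: "flat s \<le> flat t" "flat (1 - t) \<le> flat (1 - s)" using assms by (auto intro: flat_mono)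
  have "flat s * flat (1 - t) \<le> flat t * flat (1 - s)"
    using a by (intro mult_mono) (auto simp: flat_nonneg)
  then show ?thesis using step_den_pos[of s] step_den_pos[of t]
    by (simp add: step_def divide_simps algebra_simps)
qed


definition chi :: "real \<Rightarrow> real \<Rightarrow> real" where
  "chi d x = (if x \<le> 0 then 1 else 1 - step (d * ln x + 2))"

lemma chi_one:
  assumes "d > 0" "x < exp (-2 / d)"
  shows "chi d x = 1"
proof (cases "x \<le> 0")
  case False
  then have "ln x < ln (exp (-2 / d))" using assms(2) by (subst ln_less_cancel_iff) auto
  then have "ln x < -2 / d" by simp
  then have "d * ln x < d * (-2 / d)" using assms(1) by (intro mult_strict_left_mono) auto
  then have "d * ln x + 2 \<le> 0" using assms(1) by simp
  then show ?thesis using False by (simp add: chi_def step_zero)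
qed (simp add: chi_def)

lemma chi_zero: "x > 0 \<Longrightarrow> d * ln x + 2 \<ge> 1 \<Longrightarrow> chi d x = 0"
  by (simp add: chi_def step_one)

lemma chi_bounds: "0 \<le> chi d x \<and> chi d x \<le> 1"
  using step_nonneg step_le1 by (simp add: chi_def)

lemma chi_antimono: assumes "d > 0" shows "antimono (chi d)"
proof (rule antimonoI)
  fix x y :: real assume xy: "x \<le> y"
  show "chi d y \<le> chi d x"
  proof (cases "x \<le> 0")
    case True then show ?thesis using chi_bounds[of d y] by (simp add: chi_def)
  next
    case False
    then have "ln x \<le> ln y" using xy by simp
    then have "d * ln x + 2 \<le> d * ln y + 2" using assms by (simp add: mult_left_mono)
    then show ?thesis using False xy step_mono by (simp add: chi_def)
  qed
qed

lemma smooth_chi: assumes "d > 0" shows "smooth_real (chi d)"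
proof (rule smooth_real_cover)
  show "smooth_on {..<exp (-2 / d)} (chi d)"
    by (rule smooth_on_cong[OF _ _ smooth_on_const[of _ 1]]) (use chi_one assms in auto)
  have s1: "smooth_on {0<..} (\<lambda>x. d * ln x + 2)"
    by (rule smooth_on_compose[OF _ open_UNIV _ smooth_on_affine smooth_on_ln]) auto
  have s2: "smooth_on {0<..} (\<lambda>x. step (d * ln x + 2))"
    by (rule smooth_on_compose[OF _ open_UNIV _ smooth_step s1]) auto
  have s3: "smooth_on {0<..} (\<lambda>x. (-1) * step (d * ln x + 2))"
    by (rule smooth_on_mult[OF open_greaterThan smooth_on_const[OF open_greaterThan] s2])
  have s4: "smooth_on {0<..} (\<lambda>x. 1 + (-1) * step (d * ln x + 2))"
    by (rule smooth_on_add[OF open_greaterThan smooth_on_const[OF open_greaterThan] s3])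
  have s5: "1 + (-1) * step (d * ln y + 2) = chi d y" if "y \<in> {0<..}" for y
    using that unfolding chi_def by simp
  show "smooth_on {0<..} (chi d)"
    by (rule smooth_on_cong[OF open_greaterThan s5 s4])
  have "x \<in> {..<exp (-2 / d)} \<union> {0<..}" for x
  proof (cases "x > 0")
    case False
    then have "x < exp (-2 / d)" using exp_gt_zero[of "-2/d"] by linarith
    then show ?thesis by simp
  qed simp
  then show "{..<exp (-2 / d)} \<union> {0<..} = UNIV" by blast
qed

lemma step_diff: "step differentiable (at t)"
  using smooth_onD[OF smooth_step, of 0] by (simp add: Dn_0)

lemma step_cont: "continuous_on UNIV step"
  using step_diff by (intro continuous_at_imp_continuous_on) (auto intro: differentiable_imp_continuous_within)

lemma deriv_step_bound: "\<exists>M\<ge>0. \<forall>t. \<bar>deriv step t\<bar> \<le> M"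
proof -
  have "Dn UNIV 1 step" by (rule smooth_onD[OF smooth_step])
  then have "\<forall>t. deriv step differentiable (at t)" by (simp add: Dn_Suc Dn_0)
  then have "continuous_on {0..1} (deriv step)"
    by (intro continuous_at_imp_continuous_on) (auto intro: differentiable_imp_continuous_within)
  then have "bounded (deriv step ` {0..1})"
    by (intro compact_imp_bounded compact_continuous_image) auto
  then obtain B where B0: "\<forall>y\<in>deriv step ` {0..1}. norm y \<le> B"
    unfolding bounded_iff by blast
  have B: "\<bar>deriv step t\<bar> \<le> B" if "t \<in> {0..1}" for t
    using B0 that by auto
  have "\<bar>deriv step t\<bar> \<le> max B 0" for t
  proof -
    consider "t < 0" | "t \<in> {0..1}" | "t > 1" by fastforce
    then show ?thesis
    proof cases
      case 1
      have "deriv step t = deriv (\<lambda>_. 0) t"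
        by (rule deriv_cong_open[of "{..<0}"]) (use 1 step_zero in auto)
      then show ?thesis by simp
    next
      case 2 then show ?thesis using B[of t] by simp
    next
      case 3
      have "deriv step t = deriv (\<lambda>_. 1) t"
        by (rule deriv_cong_open[of "{1<..}"]) (use 3 step_one in auto)
      then show ?thesis by simp
    qed
  qed
  then show ?thesis by (intro exI[of _ "max B 0"]) auto
qed

lemma deriv_chi_bound:
  assumes "d > 0" "x \<ge> 0" "\<forall>t. \<bar>deriv step t\<bar> \<le> M" "M \<ge> 0"
  shows "\<bar>- deriv (chi d) x * sin x\<bar> \<le> M * d"
proof (cases "x < exp (-2 / d)")
  case True
  have "deriv (chi d) x = deriv (\<lambda>_. 1) x"
    by (rule deriv_cong_open[of "{..<exp (-2 / d)}"]) (use True chi_one assms(1) in auto)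
  then show ?thesis using assms by simp
next
  case False
  then have x: "x > 0" using exp_gt_zero[of "-2/d"] by linarith
  have D1: "DERIV (\<lambda>x. d * ln x + 2) x :> d * inverse x"
    using x by (auto intro!: derivative_eq_intros simp: divide_inverse)
  have D2: "DERIV step (d * ln x + 2) :> deriv step (d * ln x + 2)"
    by (rule real_diff_DERIV[OF step_diff])
  have "DERIV (\<lambda>x. 1 - step (d * ln x + 2)) x :> 0 - deriv step (d * ln x + 2) * (d * inverse x)"
    by (rule DERIV_diff[OF DERIV_const DERIV_chain2[OF D2 D1]])
  then have "deriv (\<lambda>x. 1 - step (d * ln x + 2)) x = - (deriv step (d * ln x + 2) * (d * inverse x))"
    by (simp add: DERIV_imp_deriv)
  moreover have "deriv (chi d) x = deriv (\<lambda>x. 1 - step (d * ln x + 2)) x"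
    by (rule deriv_cong_open[of "{0<..}"]) (use x in \<open>auto simp: chi_def\<close>)
  ultimately have eq: "deriv (chi d) x = - (deriv step (d * ln x + 2) * (d / x))"
    by (simp add: divide_inverse)
  have "\<bar>- deriv (chi d) x * sin x\<bar> = \<bar>deriv step (d * ln x + 2)\<bar> * d * (\<bar>sin x\<bar> / x)"
    using x assms(1) by (simp add: eq abs_mult)
  also have "\<dots> \<le> M * d * 1"
    using assms(1,3,4) x abs_sin_x_le_abs_x[of x]
    by (intro mult_mono) auto
  finally show ?thesis by simp
qed

lemma sin_lower: assumes "0 < r" "r < pi / 2" shows "sin r \<ge> r / 3"
proof -
  have "\<bar>sin r - (\<Sum>m<3. sin_coeff m * r ^ m)\<bar> \<le> inverse (fact 3) * \<bar>r\<bar> ^ 3"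
    by (rule Maclaurin_sin_bound)
  moreover have "(\<Sum>m<3. sin_coeff m * r ^ m) = r"
    by (simp add: sin_coeff_def eval_nat_numeral)
  ultimately have h6: "\<bar>sin r - r\<bar> * 6 \<le> r ^ 3" using assms by (simp add: fact_numeral)
  define A where "A = \<bar>sin r - r\<bar>"
  define R where "R = r ^ 3"
  have h7: "A * 6 \<le> R" using h6 unfolding A_def R_def .
  have h8: "r - sin r \<le> A" unfolding A_def by (metis abs_ge_self abs_minus_commute)
  have "sin r \<ge> r - R / 6" using h7 h8 by linarith
  then have "sin r \<ge> r - r ^ 3 / 6" unfolding R_def .
  moreover have "r ^ 3 / 6 \<le> 2 * r / 3"
  proof -
    have "r < 2" using assms pi_less_4 by linarith
    then have "r * r \<le> 2 * 2" using assms by (intro mult_mono) auto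
    then have "(r * r) * r \<le> 4 * r" using assms by (intro mult_right_mono) auto
    then show ?thesis by (simp add: power3_eq_cube)
  qed
  ultimately show ?thesis by linarith
qed


lemma ratio_bound:
  assumes "d > 0" "M \<ge> 0" "\<forall>t. \<bar>deriv step t\<bar> \<le> M" "0 < r" "r < pi / 2"
  shows "\<bar>integral {0..r} (\<lambda>x. - deriv (chi d) x * sin x) / sin r\<bar> \<le> 3 * M * d"
proof -
  let ?f = "\<lambda>x. - deriv (chi d) x * sin x"
  have I: "\<bar>integral {0..r} ?f\<bar> \<le> M * d * r"
  proof (cases "?f integrable_on {0..r}")
    case True
    then have "(?f has_integral integral {0..r} ?f) (cbox 0 r)"
      by (simp add: cbox_interval has_integral_integral)
    note hi = this
    have bnd: "norm (?f x) \<le> M * d" if "x \<in> cbox 0 r" for x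
      using that assms deriv_chi_bound[of d x M] by (auto simp: cbox_interval)
    have Md: "0 \<le> M * d" using assms by simp
    show ?thesis using has_integral_bound[OF Md hi bnd] assms by (simp add: cbox_interval)
  next
    case False
    then have "integral {0..r} ?f = 0" by (rule not_integrable_integral)
    then show ?thesis using assms by (simp only:) simp
  qed
  have s: "sin r \<ge> r / 3" by (rule sin_lower[OF assms(4,5)])
  have "\<bar>integral {0..r} ?f / sin r\<bar> = \<bar>integral {0..r} ?f\<bar> / sin r"
  proof -
    have sp: "sin r > 0" using s assms(4) by linarith
    show ?thesis by (simp only: abs_divide abs_of_pos[OF sp])
  qed
  also have "\<dots> \<le> (M * d * r) / (r / 3)"
    by (rule frac_le) (use I s assms in auto)
  also have "\<dots> = 3 * M * d" using assms(4) by simp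
  finally show ?thesis .
qed

lemma chi_continuous: "continuous_on ({0<..1} \<times> UNIV) (\<lambda>(d, x). chi d x)"
proof -
  define V1 where "V1 = {p :: real \<times> real. 0 < fst p \<and> snd p < exp (-2 / fst p)}"
  define V2 where "V2 = {p :: real \<times> real. 0 < snd p}"
  have "V1 = ({0<..} \<times> UNIV) \<inter> (\<lambda>p. exp (-2 / fst p) - snd p) -` {0<..}"
    unfolding V1_def by auto
  moreover have "open (({0<..} \<times> UNIV) \<inter> (\<lambda>p::real\<times>real. exp (-2 / fst p) - snd p) -` {0<..})"
    by (rule continuous_open_preimage) (auto intro!: continuous_intros open_Times)
  ultimately have o1: "open V1" by simp
  have o2: "open V2" unfolding V2_def
    by (intro open_Collect_less continuous_intros)
  have c1: "continuous_on V1 (\<lambda>(d, x). chi d x)"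
  proof (rule continuous_on_eq[OF continuous_on_const[of V1 1]])
    fix p assume "p \<in> V1"
    then have "chi (fst p) (snd p) = 1" unfolding V1_def by (intro chi_one) auto
    then show "1 = (\<lambda>(d, x). chi d x) p" by (simp add: case_prod_beta)
  qed
  have c2: "continuous_on V2 (\<lambda>(d, x). chi d x)"
  proof (rule continuous_on_eq)
    have "continuous_on V2 (\<lambda>p. fst p * ln (snd p) + 2)"
      unfolding V2_def by (intro continuous_intros) auto
    then have "continuous_on V2 (\<lambda>p. step (fst p * ln (snd p) + 2))"
      by (rule continuous_on_compose2[OF step_cont]) auto
    then show "continuous_on V2 (\<lambda>p. 1 - step (fst p * ln (snd p) + 2))"
      by (intro continuous_intros)
    fix p assume "p \<in> V2"
    then show "1 - step (fst p * ln (snd p) + 2) = (\<lambda>(d, x). chi d x) p"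
      unfolding V2_def by (auto simp: chi_def case_prod_beta)
  qed
  have "continuous_on (V1 \<union> V2) (\<lambda>(d, x). chi d x)"
    by (rule continuous_on_open_Un[OF o1 o2 c1 c2])
  moreover have "{0<..1} \<times> UNIV \<subseteq> V1 \<union> V2"
  proof
    fix p :: "real \<times> real" assume p: "p \<in> {0<..1} \<times> UNIV"
    show "p \<in> V1 \<union> V2"
    proof (cases "snd p > 0")
      case False
      then have "snd p < exp (-2 / fst p)" using exp_gt_zero[of "-2 / fst p"] by linarith
      then show ?thesis using p unfolding V1_def by auto
    qed (auto simp: V2_def)
  qed
  ultimately show ?thesis by (rule continuous_on_subset)
qed


theorem lemma3p2:
  "\<exists>chi :: real \<Rightarrow> real \<Rightarrow> real.
     (\<forall>d\<in>{0<..1}. smooth_real (chi d) \<and> (\<forall>x. 0 \<le> chi d x \<and> chi d x \<le> 1)) \<and>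
     continuous_on ({0<..1} \<times> UNIV) (\<lambda>(d, x). chi d x) \<and>
     (\<forall>d\<in>{0<..1}. antimono (chi d)) \<and>
     (\<forall>d\<in>{0<..1}. \<exists>\<eta>>0. (\<forall>x. x < \<eta> \<longrightarrow> chi d x = 1) \<and>
                              (\<forall>x. x > pi / 2 - \<eta> \<longrightarrow> chi d x = 0)) \<and>
     (\<forall>x. ((\<lambda>d. chi d x) \<longlongrightarrow> (if x \<le> 0 then 1 else 0)) (at_right 0)) \<and>
     (\<forall>\<^sub>F d in at_right 0.
        bdd_above ((\<lambda>r. integral {0..r} (\<lambda>x. - deriv (chi d) x * sin x) / sin r) ` {0<..<pi/2})) \<and>
     ((\<lambda>d. SUP r\<in>{0<..<pi/2}. integral {0..r} (\<lambda>x. - deriv (chi d) x * sin x) / sin r)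
        \<longlongrightarrow> 0) (at_right 0)"
proof -
  obtain M where M0: "M \<ge> 0" and M: "\<forall>t. \<bar>deriv step t\<bar> \<le> M"
    using deriv_step_bound by blast
  define rat where "rat d r = integral {0..r} (\<lambda>x. - deriv (chi d) x * sin x) / sin r" for d r
  have rb: "\<bar>rat d r\<bar> \<le> 3 * M * d" if "d > 0" "r \<in> {0<..<pi/2}" for d r
    unfolding rat_def using ratio_bound[of d M r] that M0 M by auto
  have ev: "\<forall>\<^sub>F d in at_right (0::real). d \<in> {0<..<1}"
    by (rule eventually_at_right_real) simp
  have one_in: "(1::real) \<in> {0<..<pi/2}" using pi_gt3 by auto
  have bdd: "bdd_above (rat d ` {0<..<pi/2})" if "d > 0" for d
    by (rule bdd_aboveI2[of _ _ "3 * M * d"]) (use rb[OF that] in \<open>auto simp: abs_le_iff\<close>)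
  have sup_up: "(SUP r\<in>{0<..<pi/2}. rat d r) \<le> 3 * M * d" if "d > 0" for d
    by (rule cSUP_least) (use rb[OF that] one_in in \<open>auto simp: abs_le_iff\<close>)
  have sup_lo: "- (3 * M * d) \<le> (SUP r\<in>{0<..<pi/2}. rat d r)" if "d > 0" for d
  proof -
    have "- (3 * M * d) \<le> rat d 1" using rb[OF that one_in] by (simp add: abs_le_iff)
    also have "\<dots> \<le> (SUP r\<in>{0<..<pi/2}. rat d r)"
      by (rule cSUP_upper[OF one_in bdd[OF that]])
    finally show ?thesis .
  qed
  have P1: "\<forall>d\<in>{0<..1}. smooth_real (chi d) \<and> (\<forall>x. 0 \<le> chi d x \<and> chi d x \<le> 1)"
    using smooth_chi chi_bounds by auto
  have P3: "\<forall>d\<in>{0<..1}. antimono (chi d)"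
    using chi_antimono by auto
  have P4: "\<forall>d\<in>{0<..1}. \<exists>\<eta>>0. (\<forall>x. x < \<eta> \<longrightarrow> chi d x = 1) \<and>
                              (\<forall>x. x > pi / 2 - \<eta> \<longrightarrow> chi d x = 0)"
  proof
    fix d :: real assume d: "d \<in> {0<..1}"
    show "\<exists>\<eta>>0. (\<forall>x. x < \<eta> \<longrightarrow> chi d x = 1) \<and> (\<forall>x. x > pi / 2 - \<eta> \<longrightarrow> chi d x = 0)"
    proof (intro exI[of _ "min (exp (-2 / d)) (1/2)"] conjI allI impI)
      show "0 < min (exp (-2 / d)) (1/2)" by simp
      fix x
      show "x < min (exp (-2 / d)) (1/2) \<Longrightarrow> chi d x = 1" using d chi_one by auto
      assume x: "x > pi / 2 - min (exp (-2 / d)) (1/2)"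
      then have "x > 1" using pi_gt3 by linarith
      then have "ln x > 0" by simp
      then have "d * ln x \<ge> 0" using d by simp
      then show "chi d x = 0" using \<open>x > 1\<close> by (intro chi_zero) auto
    qed
  qed
  have P5: "\<forall>x. ((\<lambda>d. chi d x) \<longlongrightarrow> (if x \<le> 0 then 1 else 0)) (at_right 0)"
  proof
    fix x :: real
    show "((\<lambda>d. chi d x) \<longlongrightarrow> (if x \<le> 0 then 1 else 0)) (at_right 0)"
    proof (cases "x \<le> 0")
      case True then show ?thesis by (simp add: chi_def)
    next
      case False
      have "((\<lambda>d. d * ln x + 2) \<longlongrightarrow> 0 * ln x + 2) (at_right 0)"
        by (intro tendsto_intros)
      then have "\<forall>\<^sub>F d in at_right 0. 1 < d * ln x + 2"
        by (rule order_tendstoD) simp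
      then have "\<forall>\<^sub>F d in at_right 0. chi d x = 0"
        by (rule eventually_mono) (use False chi_zero in auto)
      then show ?thesis using False by (simp add: tendsto_eventually)
    qed
  qed
  have P6: "\<forall>\<^sub>F d in at_right 0. bdd_above (rat d ` {0<..<pi/2})"
    using ev by (rule eventually_mono) (use bdd in auto)
  have lim1: "((\<lambda>d. 3 * M * d) \<longlongrightarrow> 0) (at_right 0)"
  proof -
    have "((\<lambda>d. 3 * M * d) \<longlongrightarrow> 3 * M * 0) (at_right (0::real))"
      by (intro tendsto_intros)
    then show ?thesis by simp
  qed
  have lim2: "((\<lambda>d. - (3 * M * d)) \<longlongrightarrow> 0) (at_right 0)"
    using tendsto_minus[OF lim1] by simp
  have P7: "((\<lambda>d. SUP r\<in>{0<..<pi/2}. rat d r) \<longlongrightarrow> 0) (at_right 0)"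
  proof (rule tendsto_sandwich[OF _ _ lim2 lim1])
    show "\<forall>\<^sub>F d in at_right 0. - (3 * M * d) \<le> (SUP r\<in>{0<..<pi/2}. rat d r)"
      using ev by (rule eventually_mono) (use sup_lo in auto)
    show "\<forall>\<^sub>F d in at_right 0. (SUP r\<in>{0<..<pi/2}. rat d r) \<le> 3 * M * d"
      using ev by (rule eventually_mono) (use sup_up in auto)
  qed
  show ?thesis
    apply (rule exI[of _ chi])
    using P1 chi_continuous P3 P4 P5 P6 P7 unfolding rat_def by blast
qed

end
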